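(* For every integer $T>0$ and real $\lambda>0$: (i) with $r=\sqrt{T+1}\,n$ and $n\ge r^2/\lambda^2$, $\mathsf{VC}\text{-}\mathsf{dim}\big(\mathbb{H}_{r,\lambda}(\mathcal{E}_{\mathsf{WL}}(n,d_T))\big)\in\Theta(r^2/\lambda^2)$; (ii) with $r=\sqrt{T/(T+1)}$ and $n\ge r^2/\lambda^2$, $\mathsf{VC}\text{-}\mathsf{dim}\big(\mathbb{H}_{1,\lambda}(\overline{\mathcal{E}}_{\mathsf{WL}}(n,d_T))\big)\in\Theta(1/\lambda^2)$.
   Context: $\mathcal{G}_n$ is the set of (unlabeled, simple, undirected) graphs on $n$ vertices. $1$-WL colouring: $C^1_0$ constant, $C^1_t(v)=\mathsf{RELABEL}(C^1_{t-1}(v),\{\!\{C^1_{t-1}(u):u\in N(v)\}\!\})$ with a fixed injective $\mathsf{RELABEL}$ shared by all graphs. Let $\Sigma_t$ be the (finite) set of colours occurring at round $t$ over all graphs in $\mathcal{G}_n$; $\phi_t(G)\in\mathbb{R}^{\Sigma_t}$ has entry $\phi_t(G)_c=|\{v:C^1_t(v)=c\}|$, and $\phi^{(T)}_{\mathsf{WL}}(G)=[\phi_0(G),\dots,\phi_T(G)]\in\mathbb{R}^{d_T}$ (concatenation), $\overline{\phi^{(T)}_{\mathsf{WL}}}(G)=\phi^{(T)}_{\mathsf{WL}}(G)/\|\phi^{(T)}_{\mathsf{WL}}(G)\|$ (Euclidean norm). $\mathcal{E}_{\mathsf{WL}}(n,d_T)=\{\phi^{(T)}_{\mathsf{WL}}\}$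 and $\overline{\mathcal{E}}_{\mathsf{WL}}(n,d_T)=\{\overline{\phi^{(T)}_{\mathsf{WL}}}\}$ (as maps $\mathcal{G}_n\to\mathbb{R}^{d_T}$). A labelled sample $(\mathbf{x}_1,y_1),\dots,(\mathbf{x}_s,y_s)\in\mathbb{R}^d\times\{0,1\}$ is $(r,\lambda)$-separable if all $\mathbf{x}_i$ lie in some Euclidean ball of radius $r$ and the Euclidean distance between the convex hulls of $\{\mathbf{x}_i:y_i=0\}$ and $\{\mathbf{x}_i:y_i=1\}$ is at least $2\lambda$. For a class $\mathcal{E}$ of maps $\mathcal{G}_n\to\mathbb{R}^d$, $\mathbb{H}_{r,\lambda}(\mathcal{E})$ is the set of partial concepts $h:\mathcal{G}_n\to\{0,1,\star\}$ such that for all $G_1,\dots,G_s$ in $\mathrm{supp}(h)=\{G:h(G)\ne\star\}$ there is $\mathrm{emb}\in\mathcal{E}$ with $(\mathrm{emb}(G_1),h(G_1)),\dots,(\mathrm{emb}(G_s),h(G_s))$ $(r,\lambda)$-separable. The VC dimension of a partial concept class is the largest $m$ such that some $\{x_1,\dots,x_m\}$ is shattered, i.e. for every $\tau\in\{0,1\}^m$ there is $h$ in the class with $h(x_i)=\tau_i$ for all $i$. *)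

theory Defs
  imports "HOL-Analysis.Analysis" "HOL-Library.Multiset"
begin

definition graph_on :: "nat \<Rightarrow> nat set set \<Rightarrow> bool" where
  "graph_on n E \<longleftrightarrow> E \<subseteq> {{u, v} | u v. u < n \<and> v < n \<and> u \<noteq> v}"

definition graph_iso :: "nat \<Rightarrow> nat set set \<Rightarrow> nat set set \<Rightarrow> bool" where
  "graph_iso n E E' \<longleftrightarrow> (\<exists>f. bij_betw f {..<n} {..<n} \<and>
      (\<forall>u<n. \<forall>v<n. {u, v} \<in> E \<longleftrightarrow> {f u, f v} \<in> E'))"

text \<open>Unlabelled graphs = isomorphism classes of labelled graphs; G_n is the set of them.\<close>

definition iso_class :: "nat \<Rightarrow> nat set set \<Rightarrow> nat set set set" where
  "iso_class n E = {E'. graph_on n E' \<and> graph_iso n E E'}"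

definition graphs :: "nat \<Rightarrow> nat set set set set" where
  "graphs n = iso_class n ` {E. graph_on n E}"

definition nbrs :: "nat set set \<Rightarrow> nat \<Rightarrow> nat set" where
  "nbrs E v = {u. {u, v} \<in> E}"

text \<open>Colours are represented canonically: the injective RELABEL is the constructor
  WLc applied to (old colour, multiset of neighbour colours); the initial colour is WL0.\<close>

datatype wlcol = WL0 | WLc wlcol "wlcol multiset"

fun wl :: "nat set set \<Rightarrow> nat \<Rightarrow> nat \<Rightarrow> wlcol" where
  "wl E 0 v = WL0"
| "wl E (Suc t) v = WLc (wl E t v) (image_mset (\<lambda>u. wl E t u) (mset_set (nbrs E v)))"

definition wl_colours :: "nat \<Rightarrow> nat \<Rightarrow> wlcol set" where
  "wl_colours n t = {wl E t v | E v. graph_on n E \<and> v < n}"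

text \<open>Coordinates of R^{d_T}: pairs (t, c) with t \<le> T and c \<in> Sigma_t (the concatenation
  of the blocks phi_0, ..., phi_T).\<close>

definition wl_index :: "nat \<Rightarrow> nat \<Rightarrow> (nat \<times> wlcol) set" where
  "wl_index n T = {(t, c). t \<le> T \<and> c \<in> wl_colours n t}"

definition wl_dim :: "nat \<Rightarrow> nat \<Rightarrow> nat" where
  "wl_dim n T = card (wl_index n T)"

definition phi_lab :: "nat \<Rightarrow> nat \<Rightarrow> nat set set \<Rightarrow> (nat \<times> wlcol) \<Rightarrow> real" where
  "phi_lab n T E = (\<lambda>(t, c). if (t, c) \<in> wl_index n T
      then real (card {v. v < n \<and> wl E t v = c}) else 0)"

definition enorm :: "'i set \<Rightarrow> ('i \<Rightarrow> real) \<Rightarrow> real" where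
  "enorm I x = sqrt (\<Sum>i\<in>I. (x i)\<^sup>2)"

definition edist :: "'i set \<Rightarrow> ('i \<Rightarrow> real) \<Rightarrow> ('i \<Rightarrow> real) \<Rightarrow> real" where
  "edist I x y = enorm I (\<lambda>i. x i - y i)"

text \<open>The WL embedding phi^(T)_WL on unlabelled graphs (via any representative;
  it is isomorphism invariant) and its normalisation.\<close>

definition phi_wl :: "nat \<Rightarrow> nat \<Rightarrow> nat set set set \<Rightarrow> (nat \<times> wlcol) \<Rightarrow> real" where
  "phi_wl n T G = phi_lab n T (SOME E. E \<in> G)"

definition phi_wl_norm :: "nat \<Rightarrow> nat \<Rightarrow> nat set set set \<Rightarrow> (nat \<times> wlcol) \<Rightarrow> real" where
  "phi_wl_norm n T G = (\<lambda>i. phi_wl n T G i / enorm (wl_index n T) (phi_wl n T G))"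

definition E_WL :: "nat \<Rightarrow> nat \<Rightarrow> (nat set set set \<Rightarrow> (nat \<times> wlcol) \<Rightarrow> real) set" where
  "E_WL n T = {phi_wl n T}"

definition E_WL_norm :: "nat \<Rightarrow> nat \<Rightarrow> (nat set set set \<Rightarrow> (nat \<times> wlcol) \<Rightarrow> real) set" where
  "E_WL_norm n T = {phi_wl_norm n T}"

definition conv_hull :: "('i \<Rightarrow> real) set \<Rightarrow> ('i \<Rightarrow> real) set" where
  "conv_hull S = {(\<lambda>i. \<Sum>s\<in>S. a s * s i) | a. (\<forall>s\<in>S. 0 \<le> a s) \<and> sum a S = 1}"

text \<open>(r, lambda)-separability of a labelled sample in R^I (labels: False = 0, True = 1).
  The distance between the hulls is at least 2 lambda iff every pair of points of the two
  hulls has distance at least 2 lambda (vacuous if one class is empty).\<close>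

definition separable :: "'i set \<Rightarrow> real \<Rightarrow> real \<Rightarrow> (('i \<Rightarrow> real) \<times> bool) list \<Rightarrow> bool" where
  "separable I r lam S \<longleftrightarrow>
     (\<exists>z. \<forall>p\<in>set S. edist I z (fst p) \<le> r) \<and>
     (\<forall>p\<in>conv_hull {fst q | q. q \<in> set S \<and> \<not> snd q}.
        \<forall>p'\<in>conv_hull {fst q | q. q \<in> set S \<and> snd q}. 2 * lam \<le> edist I p p')"

text \<open>Partial concepts on G_n: None plays the role of the undefined value (star);
  they are undefined outside G_n.\<close>

definition supp :: "('a \<Rightarrow> bool option) \<Rightarrow> 'a set" where
  "supp h = {x. h x \<noteq> None}"

definition H_class :: "nat \<Rightarrow> 'i set \<Rightarrow> (nat set set set \<Rightarrow> 'i \<Rightarrow> real) set \<Rightarrow> real \<Rightarrow> real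
    \<Rightarrow> (nat set set set \<Rightarrow> bool option) set" where
  "H_class n I Emb r lam = {h. supp h \<subseteq> graphs n \<and>
     (\<forall>Gs. set Gs \<subseteq> supp h \<longrightarrow>
        (\<exists>emb\<in>Emb. separable I r lam (map (\<lambda>G. (emb G, the (h G))) Gs)))}"

definition shatters :: "('a \<Rightarrow> bool option) set \<Rightarrow> 'a set \<Rightarrow> bool" where
  "shatters H A \<longleftrightarrow> (\<forall>\<tau> :: 'a \<Rightarrow> bool. \<exists>h\<in>H. \<forall>x\<in>A. h x = Some (\<tau> x))"

definition vc_dim :: "'a set \<Rightarrow> ('a \<Rightarrow> bool option) set \<Rightarrow> nat" where
  "vc_dim X H = Sup {card A | A. A \<subseteq> X \<and> finite A \<and> shatters H A}"

end

theory Submission imports Defs begin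
lemma greedy_signs:
  fixes v :: "nat \<Rightarrow> 'i \<Rightarrow> real"
  shows "\<exists>\<epsilon>. (\<Sum>i\<in>I. (\<Sum>j<k. (if \<epsilon> j then - v j i else v j i))\<^sup>2) \<le> (\<Sum>j<k. \<Sum>i\<in>I. (v j i)\<^sup>2)"
proof (induction k)
  case 0
  then show ?case by simp
next
  case (Suc k)
  then obtain \<epsilon> where e: "(\<Sum>i\<in>I. (\<Sum>j<k. (if \<epsilon> j then - v j i else v j i))\<^sup>2) \<le> (\<Sum>j<k. \<Sum>i\<in>I. (v j i)\<^sup>2)" by blast
  define s where "s i = (\<Sum>j<k. (if \<epsilon> j then - v j i else v j i))" for i
  have upd: "(\<Sum>j<Suc k. (if (\<epsilon>(k:=b)) j then - v j i else v j i)) = s i + (if b then - v k i else v k i)" for b i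
  proof -
    have "(\<Sum>j<k. (if (\<epsilon>(k:=b)) j then - v j i else v j i)) = s i"
      unfolding s_def by (intro sum.cong) auto
    then show ?thesis by simp
  qed
  have par: "(\<Sum>i\<in>I. (s i + v k i)\<^sup>2) + (\<Sum>i\<in>I. (s i - v k i)\<^sup>2) = 2 * (\<Sum>i\<in>I. (s i)\<^sup>2) + 2 * (\<Sum>i\<in>I. (v k i)\<^sup>2)"
    by (simp add: sum.distrib[symmetric] sum_distrib_left power2_eq_square algebra_simps)
  have "(\<Sum>i\<in>I. (s i + v k i)\<^sup>2) \<le> (\<Sum>i\<in>I. (s i)\<^sup>2) + (\<Sum>i\<in>I. (v k i)\<^sup>2) \<or>
        (\<Sum>i\<in>I. (s i - v k i)\<^sup>2) \<le> (\<Sum>i\<in>I. (s i)\<^sup>2) + (\<Sum>i\<in>I. (v k i)\<^sup>2)"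
    using par by linarith
  then show ?case
  proof
    assume h: "(\<Sum>i\<in>I. (s i + v k i)\<^sup>2) \<le> (\<Sum>i\<in>I. (s i)\<^sup>2) + (\<Sum>i\<in>I. (v k i)\<^sup>2)"
    show ?case
      apply (rule exI[of _ "\<epsilon>(k:=False)"])
      unfolding upd using h e s_def by simp
  next
    assume h: "(\<Sum>i\<in>I. (s i - v k i)\<^sup>2) \<le> (\<Sum>i\<in>I. (s i)\<^sup>2) + (\<Sum>i\<in>I. (v k i)\<^sup>2)"
    show ?case
      apply (rule exI[of _ "\<epsilon>(k:=True)"])
      unfolding upd using h e s_def by simp
  qed
qed

lemma sq_ge_inv_card:
  fixes a :: "'a \<Rightarrow> real"
  assumes "finite S" "sum a S = 1"
  shows "1 / real (card S) \<le> (\<Sum>s\<in>S. (a s)\<^sup>2)"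
proof -
  have ne: "S \<noteq> {}" using assms by auto
  then have N: "real (card S) > 0" using assms by auto
  define N where "N = real (card S)"
  have "0 \<le> (\<Sum>s\<in>S. (a s - 1/N)\<^sup>2)" by (simp add: sum_nonneg)
  also have "\<dots> = (\<Sum>s\<in>S. (a s)\<^sup>2) - 2/N * sum a S + N * (1/N)\<^sup>2"
  proof -
    have "(\<Sum>s\<in>S. (a s - 1/N)\<^sup>2) = (\<Sum>s\<in>S. (a s)\<^sup>2 - 2/N * a s + (1/N)\<^sup>2)"
      by (intro sum.cong) (auto simp: power2_diff)
    also have "\<dots> = (\<Sum>s\<in>S. (a s)\<^sup>2) - 2/N * sum a S + N * (1/N)\<^sup>2"
      by (simp add: sum.distrib sum_subtractf sum_distrib_left N_def)
    finally show ?thesis .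
  qed
  also have "\<dots> = (\<Sum>s\<in>S. (a s)\<^sup>2) - 1/N"
    using assms N by (simp add: N_def power2_eq_square field_simps)
  finally show ?thesis unfolding N_def by simp
qed

lemma centroid_in_hull:
  fixes F :: "nat \<Rightarrow> 'i \<Rightarrow> real"
  assumes "finite T" "k > 0" "\<forall>j<k. F j \<in> T"
  shows "(\<lambda>i. (1 / real k) * (\<Sum>j<k. F j i)) \<in> conv_hull T"
proof -
  define a where "a s = real (card {j\<in>{..<k}. F j = s}) / real k" for s
  have im: "F ` {..<k} \<subseteq> T" using assms(3) by auto
  have "(\<lambda>i. \<Sum>s\<in>T. a s * s i) = (\<lambda>i. (1 / real k) * (\<Sum>j<k. F j i))"
  proof
    fix i
    have "(\<Sum>s\<in>T. a s * s i) = (\<Sum>s\<in>T. (1 / real k) * (\<Sum>j\<in>{j\<in>{..<k}. F j = s}. F j i))"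
      unfolding a_def by (intro sum.cong) auto
    also have "\<dots> = (1 / real k) * (\<Sum>s\<in>T. (\<Sum>j\<in>{j\<in>{..<k}. F j = s}. F j i))"
      by (simp add: sum_distrib_left)
    also have "(\<Sum>s\<in>T. (\<Sum>j\<in>{j\<in>{..<k}. F j = s}. F j i)) = (\<Sum>j<k. F j i)"
      using sum.group[OF _ assms(1) im, of "\<lambda>j. F j i"] by simp
    finally show "(\<Sum>s\<in>T. a s * s i) = (1 / real k) * (\<Sum>j<k. F j i)" .
  qed
  moreover have "sum a T = 1"
  proof -
    have "sum a T = (1 / real k) * (\<Sum>s\<in>T. (\<Sum>j\<in>{j\<in>{..<k}. F j = s}. (1::real)))"
      unfolding a_def by (simp add: sum_distrib_left sum_divide_distrib[symmetric])
    also have "(\<Sum>s\<in>T. (\<Sum>j\<in>{j\<in>{..<k}. F j = s}. (1::real))) = (\<Sum>j<k. 1)"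
      using sum.group[OF _ assms(1) im, of "\<lambda>j. (1::real)"] by simp
    finally show ?thesis using assms(2) by simp
  qed
  moreover have "\<forall>s\<in>T. 0 \<le> a s" unfolding a_def by simp
  ultimately show ?thesis unfolding conv_hull_def by (intro CollectI exI[of _ a]) auto
qed

lemma edist_le_sq:
  assumes "edist I z x \<le> r"
  shows "(\<Sum>i\<in>I. (z i - x i)\<^sup>2) \<le> r\<^sup>2"
proof -
  let ?S = "(\<Sum>i\<in>I. (z i - x i)\<^sup>2)"
  have S0: "0 \<le> ?S" by (simp add: sum_nonneg)
  have "sqrt ?S \<le> r" using assms unfolding edist_def enorm_def by simp
  then have "(sqrt ?S)\<^sup>2 \<le> r\<^sup>2" using S0 by (intro power_mono) auto
  then show ?thesis using S0 by simp
qed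


lemma sq_tri: "((x::real) - y)\<^sup>2 \<le> 2 * (z - x)\<^sup>2 + 2 * (z - y)\<^sup>2"
proof -
  have "2 * (z - x)\<^sup>2 + 2 * (z - y)\<^sup>2 - (x - y)\<^sup>2 = (2 * z - x - y)\<^sup>2"
    by (simp add: power2_eq_square algebra_simps)
  moreover have "0 \<le> (2 * z - x - y)\<^sup>2" by simp
  ultimately show ?thesis by linarith
qed

lemma vc_upper:
  fixes e :: "nat set set set \<Rightarrow> 'i \<Rightarrow> real"
  assumes finA: "finite A" and sh: "shatters (H_class n I {e} r lam) A" and lam: "lam > 0"
  shows "real (card A) \<le> 2 * (r\<^sup>2 / lam\<^sup>2) + 1"
proof (cases "card A div 2 = 0")
  case True
  then have "card A \<le> 1" by auto
  then have "real (card A) \<le> 1" by simp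
  moreover have "0 \<le> r\<^sup>2 / lam\<^sup>2" by simp
  ultimately show ?thesis by linarith
next
  case False
  define m where "m = card A"
  define k where "k = m div 2"
  have k: "k > 0" "2 * k \<le> m" using False unfolding k_def m_def by auto
  obtain g where g: "bij_betw g {0..<m} A" using ex_bij_betw_nat_finite[OF finA] m_def by blast
  have ginj: "inj_on g {0..<m}" using g by (rule bij_betw_imp_inj_on)
  define v where "v j i = e (g (2*j)) i - e (g (2*j+1)) i" for j i
  obtain \<epsilon> where eps: "(\<Sum>i\<in>I. (\<Sum>j<k. (if \<epsilon> j then - v j i else v j i))\<^sup>2) \<le> (\<Sum>j<k. \<Sum>i\<in>I. (v j i)\<^sup>2)"
    using greedy_signs by blast
  define i0 where "i0 j = (if \<epsilon> j then 2*j+1 else 2*j)" for j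
  define i1 where "i1 j = (if \<epsilon> j then 2*j else 2*j+1)" for j
  define f0 where "f0 j = g (i0 j)" for j
  define f1 where "f1 j = g (i1 j)" for j
  have ilt: "i0 j < m" "i1 j < m" if "j < k" for j using that k unfolding i0_def i1_def by auto
  have idiv: "i0 j div 2 = j" "i1 j div 2 = j" "i0 j \<noteq> i1 j" for j unfolding i0_def i1_def by auto
  have f01: "f0 j \<noteq> f1 j'" if "j < k" "j' < k" for j j'
  proof
    assume "f0 j = f1 j'"
    then have "i0 j = i1 j'" using ginj ilt that unfolding f0_def f1_def inj_on_def by auto
    then show False using idiv by metis
  qed
  have fA: "f0 j \<in> A" "f1 j \<in> A" if "j < k" for j
    using ilt[OF that] g unfolding f0_def f1_def by (auto intro: bij_betw_apply)
  define \<tau> where "\<tau> G = (G \<in> f1 ` {..<k})" for G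
  obtain h where h: "h \<in> H_class n I {e} r lam" "\<forall>G\<in>A. h G = Some (\<tau> G)"
    using sh unfolding shatters_def by blast
  obtain Gs where Gs: "set Gs = A" using finite_list[OF finA] by blast
  have "set Gs \<subseteq> supp h" using h(2) Gs by (auto simp: supp_def)
  then have sep: "separable I r lam (map (\<lambda>G. (e G, the (h G))) Gs)"
    using h(1) unfolding H_class_def by auto
  have set0: "{fst q | q. q \<in> set (map (\<lambda>G. (e G, the (h G))) Gs) \<and> \<not> snd q} = e ` {G\<in>A. \<not> \<tau> G}"
    using h(2) Gs by force
  have set1: "{fst q | q. q \<in> set (map (\<lambda>G. (e G, the (h G))) Gs) \<and> snd q} = e ` {G\<in>A. \<tau> G}"
    using h(2) Gs by force
  obtain z where z: "\<forall>G\<in>A. edist I z (e G) \<le> r"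
    using sep Gs unfolding separable_def by auto
  have hull: "\<forall>p\<in>conv_hull (e ` {G\<in>A. \<not> \<tau> G}). \<forall>p'\<in>conv_hull (e ` {G\<in>A. \<tau> G}). 2 * lam \<le> edist I p p'"
    using sep unfolding separable_def set0 set1 by blast
  define p where "p i = (1 / real k) * (\<Sum>j<k. e (f0 j) i)" for i
  define p' where "p' i = (1 / real k) * (\<Sum>j<k. e (f1 j) i)" for i
  have "p \<in> conv_hull (e ` {G\<in>A. \<not> \<tau> G})"
    unfolding p_def[abs_def]
    by (rule centroid_in_hull[where F = "\<lambda>j. e (f0 j)"]) (use finA k fA f01 in \<open>auto simp: \<tau>_def\<close>)
  moreover have "p' \<in> conv_hull (e ` {G\<in>A. \<tau> G})"
    unfolding p'_def[abs_def]
    by (rule centroid_in_hull[where F = "\<lambda>j. e (f1 j)"]) (use finA k fA in \<open>auto simp: \<tau>_def\<close>)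
  ultimately have d: "2 * lam \<le> edist I p p'" using hull by blast
  have diff: "p i - p' i = (1 / real k) * (\<Sum>j<k. (if \<epsilon> j then - v j i else v j i))" for i
  proof -
    have "p i - p' i = (1 / real k) * (\<Sum>j<k. e (f0 j) i - e (f1 j) i)"
      unfolding p_def p'_def by (simp add: sum_subtractf right_diff_distrib)
    also have "(\<Sum>j<k. e (f0 j) i - e (f1 j) i) = (\<Sum>j<k. (if \<epsilon> j then - v j i else v j i))"
      by (intro sum.cong) (auto simp: f0_def f1_def i0_def i1_def v_def)
    finally show ?thesis .
  qed
  have vb: "(\<Sum>i\<in>I. (v j i)\<^sup>2) \<le> 4 * r\<^sup>2" if "j < k" for j
  proof -
    have A1: "g (2*j) \<in> A" "g (2*j+1) \<in> A" using g that k by (auto intro: bij_betw_apply)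
    have "(\<Sum>i\<in>I. (v j i)\<^sup>2) \<le> (\<Sum>i\<in>I. 2 * (z i - e (g (2*j)) i)\<^sup>2 + 2 * (z i - e (g (2*j+1)) i)\<^sup>2)"
    proof (intro sum_mono)
      fix i
      have "(v j i)\<^sup>2 \<le> 2 * (z i - e (g (2*j)) i)\<^sup>2 + 2 * (z i - e (g (2*j+1)) i)\<^sup>2"
        unfolding v_def by (rule sq_tri)
      then show "(v j i)\<^sup>2 \<le> 2 * (z i - e (g (2*j)) i)\<^sup>2 + 2 * (z i - e (g (2*j+1)) i)\<^sup>2" .
    qed
    also have "\<dots> = 2 * (\<Sum>i\<in>I. (z i - e (g (2*j)) i)\<^sup>2) + 2 * (\<Sum>i\<in>I. (z i - e (g (2*j+1)) i)\<^sup>2)"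
      by (simp add: sum.distrib sum_distrib_left)
    also have "\<dots> \<le> 2 * r\<^sup>2 + 2 * r\<^sup>2"
      using edist_le_sq[OF z[rule_format, OF A1(1)]] edist_le_sq[OF z[rule_format, OF A1(2)]] by linarith
    finally show ?thesis by simp
  qed
  have Q: "(\<Sum>i\<in>I. (p i - p' i)\<^sup>2) \<le> 4 * r\<^sup>2 / real k"
  proof -
    have "(\<Sum>i\<in>I. (p i - p' i)\<^sup>2) = (1 / real k)\<^sup>2 * (\<Sum>i\<in>I. (\<Sum>j<k. (if \<epsilon> j then - v j i else v j i))\<^sup>2)"
      unfolding diff power_mult_distrib by (rule sum_distrib_left[symmetric])
    also have "\<dots> \<le> (1 / real k)\<^sup>2 * (\<Sum>j<k. \<Sum>i\<in>I. (v j i)\<^sup>2)"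
      using eps by (intro mult_left_mono) auto
    also have "\<dots> \<le> (1 / real k)\<^sup>2 * (\<Sum>j<k. 4 * r\<^sup>2)"
      using vb by (intro mult_left_mono sum_mono) auto
    also have "\<dots> = 4 * r\<^sup>2 / real k"
      using k by (simp add: power2_eq_square field_simps)
    finally show ?thesis .
  qed
  have "(2 * lam)\<^sup>2 \<le> (edist I p p')\<^sup>2" using d lam by (intro power_mono) auto
  also have "(edist I p p')\<^sup>2 = (\<Sum>i\<in>I. (p i - p' i)\<^sup>2)"
    unfolding edist_def enorm_def by (simp add: sum_nonneg)
  finally have "4 * lam\<^sup>2 \<le> 4 * r\<^sup>2 / real k" using Q by (simp add: power_mult_distrib)
  then have "real k \<le> r\<^sup>2 / lam\<^sup>2" using k lam by (simp add: field_simps)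
  moreover have "real m \<le> 2 * real k + 1" unfolding k_def by linarith
  ultimately show ?thesis unfolding m_def by linarith
qed

lemma hull_lower:
  fixes K :: "('i \<Rightarrow> real) \<Rightarrow> 'i set" and T m :: nat
  assumes finI: "finite I" and fin0: "finite S0" and fin1: "finite S1" and disj: "S0 \<inter> S1 = {}"
    and KI: "\<forall>s\<in>S0 \<union> S1. K s \<subseteq> I \<and> card (K s) = T"
    and Kdisj: "\<forall>s\<in>S0 \<union> S1. \<forall>s'\<in>S0 \<union> S1. s \<noteq> s' \<longrightarrow> K s \<inter> K s' = {}"
    and val: "\<forall>s\<in>S0 \<union> S1. \<forall>s'\<in>S0 \<union> S1. \<forall>i\<in>K s. s' i = (if s' = s then \<alpha> else 0)"
    and c0: "card S0 \<le> m" and c1: "card S1 \<le> m"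
    and p: "p \<in> conv_hull S0" and p': "p' \<in> conv_hull S1"
  shows "2 * real T * \<alpha>\<^sup>2 / real m \<le> (\<Sum>i\<in>I. (p i - p' i)\<^sup>2)"
proof -
  obtain a0 where a0: "p = (\<lambda>i. \<Sum>s\<in>S0. a0 s * s i)" "sum a0 S0 = 1"
    using p unfolding conv_hull_def by blast
  obtain a1 where a1: "p' = (\<lambda>i. \<Sum>s\<in>S1. a1 s * s i)" "sum a1 S1 = 1"
    using p' unfolding conv_hull_def by blast
  have ne0: "S0 \<noteq> {}" using a0(2) by auto
  have ne1: "S1 \<noteq> {}" using a1(2) by auto
  have cp0: "card S0 > 0" using ne0 fin0 by auto
  have cp1: "card S1 > 0" using ne1 fin1 by auto
  have mpos: "real m > 0" using c0 cp0 by simp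
  have finK: "finite (K s)" if "s \<in> S0 \<union> S1" for s using KI that finite_subset[OF _ finI] by blast
  have pv0: "p i = a0 s * \<alpha>" "p' i = 0" if "s \<in> S0" "i \<in> K s" for s i
  proof -
    have "p i = (\<Sum>s'\<in>S0. (if s' = s then a0 s * \<alpha> else 0))"
      unfolding a0(1)
    proof (intro sum.cong refl)
      fix s' assume "s' \<in> S0"
      then have "s' i = (if s' = s then \<alpha> else 0)" using val that by blast
      then show "a0 s' * s' i = (if s' = s then a0 s * \<alpha> else 0)" by simp
    qed
    also have "\<dots> = a0 s * \<alpha>" using fin0 that by simp
    finally show "p i = a0 s * \<alpha>" .
    have "p' i = (\<Sum>s'\<in>S1. 0)"
      unfolding a1(1)
    proof (intro sum.cong refl)
      fix s' assume "s' \<in> S1"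
      moreover have "s \<notin> S1" using that disj by blast
      ultimately have "s' i = 0" using val that by force
      then show "a1 s' * s' i = 0" by simp
    qed
    then show "p' i = 0" by simp
  qed
  have pv1: "p i = 0" "p' i = a1 s * \<alpha>" if "s \<in> S1" "i \<in> K s" for s i
  proof -
    have "p' i = (\<Sum>s'\<in>S1. (if s' = s then a1 s * \<alpha> else 0))"
      unfolding a1(1)
    proof (intro sum.cong refl)
      fix s' assume "s' \<in> S1"
      then have "s' i = (if s' = s then \<alpha> else 0)" using val that by blast
      then show "a1 s' * s' i = (if s' = s then a1 s * \<alpha> else 0)" by simp
    qed
    also have "\<dots> = a1 s * \<alpha>" using fin1 that by simp
    finally show "p' i = a1 s * \<alpha>" .
    have "p i = (\<Sum>s'\<in>S0. 0)"
      unfolding a0(1)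
    proof (intro sum.cong refl)
      fix s' assume "s' \<in> S0"
      moreover have "s \<notin> S0" using that disj by blast
      ultimately have "s' i = 0" using val that by force
      then show "a0 s' * s' i = 0" by simp
    qed
    then show "p i = 0" by simp
  qed
  let ?f = "\<lambda>i. (p i - p' i)\<^sup>2"
  have "(\<Sum>i\<in>(\<Union>s\<in>S0 \<union> S1. K s). ?f i) = (\<Sum>s\<in>S0 \<union> S1. \<Sum>i\<in>K s. ?f i)"
    using fin0 fin1 finK Kdisj by (intro sum.UNION_disjoint) auto
  also have "\<dots> = (\<Sum>s\<in>S0. \<Sum>i\<in>K s. ?f i) + (\<Sum>s\<in>S1. \<Sum>i\<in>K s. ?f i)"
    using fin0 fin1 disj by (intro sum.union_disjoint) auto
  also have "(\<Sum>s\<in>S0. \<Sum>i\<in>K s. ?f i) = (\<Sum>s\<in>S0. real T * \<alpha>\<^sup>2 * (a0 s)\<^sup>2)"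
  proof (intro sum.cong refl)
    fix s assume s: "s \<in> S0"
    have "(\<Sum>i\<in>K s. ?f i) = (\<Sum>i\<in>K s. \<alpha>\<^sup>2 * (a0 s)\<^sup>2)"
      using pv0 s by (intro sum.cong) (auto simp: power_mult_distrib)
    then show "(\<Sum>i\<in>K s. ?f i) = real T * \<alpha>\<^sup>2 * (a0 s)\<^sup>2" using KI s by simp
  qed
  also have "(\<Sum>s\<in>S1. \<Sum>i\<in>K s. ?f i) = (\<Sum>s\<in>S1. real T * \<alpha>\<^sup>2 * (a1 s)\<^sup>2)"
  proof (intro sum.cong refl)
    fix s assume s: "s \<in> S1"
    have "(\<Sum>i\<in>K s. ?f i) = (\<Sum>i\<in>K s. \<alpha>\<^sup>2 * (a1 s)\<^sup>2)"
      using pv1 s by (intro sum.cong) (auto simp: power_mult_distrib)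
    then show "(\<Sum>i\<in>K s. ?f i) = real T * \<alpha>\<^sup>2 * (a1 s)\<^sup>2" using KI s by simp
  qed
  finally have eq: "(\<Sum>i\<in>(\<Union>s\<in>S0 \<union> S1. K s). ?f i) =
      real T * \<alpha>\<^sup>2 * ((\<Sum>s\<in>S0. (a0 s)\<^sup>2) + (\<Sum>s\<in>S1. (a1 s)\<^sup>2))"
    by (simp add: sum_distrib_left algebra_simps)
  have "1 / real m \<le> 1 / real (card S0)" using c0 cp0 by (simp add: frac_le)
  also have "\<dots> \<le> (\<Sum>s\<in>S0. (a0 s)\<^sup>2)" using sq_ge_inv_card[OF fin0 a0(2)] .
  finally have b0: "1 / real m \<le> (\<Sum>s\<in>S0. (a0 s)\<^sup>2)" .
  have "1 / real m \<le> 1 / real (card S1)" using c1 cp1 by (simp add: frac_le)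
  also have "\<dots> \<le> (\<Sum>s\<in>S1. (a1 s)\<^sup>2)" using sq_ge_inv_card[OF fin1 a1(2)] .
  finally have b1: "1 / real m \<le> (\<Sum>s\<in>S1. (a1 s)\<^sup>2)" .
  have TA: "0 \<le> real T * \<alpha>\<^sup>2" by simp
  have "2 * real T * \<alpha>\<^sup>2 / real m = real T * \<alpha>\<^sup>2 * (1 / real m + 1 / real m)" by (simp add: field_simps)
  also have "\<dots> \<le> real T * \<alpha>\<^sup>2 * ((\<Sum>s\<in>S0. (a0 s)\<^sup>2) + (\<Sum>s\<in>S1. (a1 s)\<^sup>2))"
    using b0 b1 TA by (intro mult_left_mono) auto
  also have "\<dots> = (\<Sum>i\<in>(\<Union>s\<in>S0 \<union> S1. K s). ?f i)" using eq by simp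
  also have "\<dots> \<le> (\<Sum>i\<in>I. ?f i)"
    using KI finI by (intro sum_mono2) auto
  finally show ?thesis .
qed

fun col :: "nat \<Rightarrow> nat \<Rightarrow> wlcol" where
  "col 0 d = WL0"
| "col (Suc t) d = WLc (col t d) (replicate_mset d (col t d))"

definition cdeg :: "wlcol \<Rightarrow> nat" where
  "cdeg x = (case x of WL0 \<Rightarrow> 0 | WLc a M \<Rightarrow> size M)"

lemma col_inj: "0 < t \<Longrightarrow> col t d = col t d' \<Longrightarrow> d = d'"
proof -
  assume t: "0 < t" and c: "col t d = col t d'"
  obtain t' where t': "t = Suc t'" using t by (cases t) auto
  have "cdeg (col t d) = d" "cdeg (col t d') = d'" unfolding t' cdeg_def by simp_all
  then show ?thesis using c by metis
qed

lemma graph_on_sub: "graph_on n E \<Longrightarrow> E \<subseteq> Pow {..<n}"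
  unfolding graph_on_def by blast

lemma nbrs_sub: "graph_on n E \<Longrightarrow> nbrs E v \<subseteq> {..<n}"
  unfolding graph_on_def nbrs_def by (auto simp: doubleton_eq_iff)

lemma wl_regular:
  assumes G: "graph_on n E" and reg: "\<forall>v<n. card (nbrs E v) = d" and v: "v < n"
  shows "wl E t v = col t d"
  using v
proof (induction t arbitrary: v)
  case 0
  then show ?case by simp
next
  case (Suc t)
  have fin: "finite (nbrs E v)" using nbrs_sub[OF G] finite_subset by blast
  have "image_mset (\<lambda>u. wl E t u) (mset_set (nbrs E v)) = image_mset (\<lambda>u. col t d) (mset_set (nbrs E v))"
  proof (rule image_mset_cong)
    fix u assume "u \<in># mset_set (nbrs E v)"
    then have "u \<in> nbrs E v" using fin by simp
    then have "u < n" using nbrs_sub[OF G] by auto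
    then show "wl E t u = col t d" using Suc.IH by blast
  qed
  also have "\<dots> = replicate_mset (card (nbrs E v)) (col t d)"
    by (simp add: image_mset_const_eq)
  also have "card (nbrs E v) = d" using reg Suc.prems by blast
  finally show ?case using Suc by simp
qed

lemma finite_graphs_on: "finite {E. graph_on n E}"
proof -
  have "{E. graph_on n E} \<subseteq> Pow (Pow {..<n})" using graph_on_sub by blast
  then show ?thesis by (rule finite_subset) simp
qed

lemma finite_graphs: "finite (graphs n)"
  unfolding graphs_def using finite_graphs_on by simp

lemma finite_wl_index: "finite (wl_index n T)"
proof -
  have c: "wl_colours n t \<subseteq> (\<lambda>(E, v). wl E t v) ` ({E. graph_on n E} \<times> {..<n})" for t
  proof
    fix c assume "c \<in> wl_colours n t"
    then obtain E v where Ev: "c = wl E t v" "graph_on n E" "v < n" unfolding wl_colours_def by blast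
    then show "c \<in> (\<lambda>(E, v). wl E t v) ` ({E. graph_on n E} \<times> {..<n})"
      by (intro image_eqI[of _ _ "(E, v)"]) auto
  qed
  have fc: "finite (wl_colours n t)" for t
    by (rule finite_subset[OF c]) (simp add: finite_graphs_on)
  have "wl_index n T \<subseteq> (\<Union>t\<le>T. {t} \<times> wl_colours n t)"
  proof
    fix x assume "x \<in> wl_index n T"
    then obtain t c where x: "x = (t, c)" "t \<le> T" "c \<in> wl_colours n t" unfolding wl_index_def by blast
    then show "x \<in> (\<Union>t\<le>T. {t} \<times> wl_colours n t)" by blast
  qed
  then show ?thesis by (rule finite_subset) (simp add: fc)
qed

lemma iso_regular:
  assumes G: "graph_on n E" and G': "graph_on n E'" and iso: "graph_iso n E E'"
    and reg: "\<forall>v<n. card (nbrs E v) = d"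
  shows "\<forall>w<n. card (nbrs E' w) = d"
proof (intro allI impI)
  fix w assume w: "w < n"
  obtain f where f: "bij_betw f {..<n} {..<n}" and fe: "\<forall>u<n. \<forall>v<n. {u, v} \<in> E \<longleftrightarrow> {f u, f v} \<in> E'"
    using iso unfolding graph_iso_def by blast
  have im: "f ` {..<n} = {..<n}" using f by (simp add: bij_betw_def)
  have finj: "inj_on f {..<n}" using f by (simp add: bij_betw_def)
  have "w \<in> f ` {..<n}" using w im by simp
  then obtain v where v: "v < n" "w = f v" by blast
  have "nbrs E' (f v) = f ` nbrs E v"
  proof
    show "nbrs E' (f v) \<subseteq> f ` nbrs E v"
    proof
      fix u' assume u': "u' \<in> nbrs E' (f v)"
      then have "u' < n" using nbrs_sub[OF G'] by auto
      then have "u' \<in> f ` {..<n}" using im by simp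
      then obtain u where u: "u < n" "u' = f u" by blast
      have "{f u, f v} \<in> E'" using u' u unfolding nbrs_def by simp
      then have "{u, v} \<in> E" using fe u v by blast
      then show "u' \<in> f ` nbrs E v" using u unfolding nbrs_def by auto
    qed
  next
    show "f ` nbrs E v \<subseteq> nbrs E' (f v)"
    proof
      fix u' assume "u' \<in> f ` nbrs E v"
      then obtain u where u: "u \<in> nbrs E v" "u' = f u" by blast
      then have "u < n" using nbrs_sub[OF G] by auto
      then have "{f u, f v} \<in> E'" using fe u v unfolding nbrs_def by blast
      then show "u' \<in> nbrs E' (f v)" using u unfolding nbrs_def by simp
    qed
  qed
  moreover have "inj_on f (nbrs E v)" using finj nbrs_sub[OF G] inj_on_subset by blast
  ultimately have "card (nbrs E' (f v)) = card (nbrs E v)" by (simp add: card_image)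
  then show "card (nbrs E' w) = d" using reg v by simp
qed

lemma self_iso_class: "graph_on n E \<Longrightarrow> E \<in> iso_class n E"
  unfolding iso_class_def graph_iso_def by (auto intro!: exI[of _ id])

lemma phi_regular:
  assumes G: "graph_on n E" and reg: "\<forall>v<n. card (nbrs E v) = d" and n: "0 < n"
  shows "phi_wl n T (iso_class n E) = (\<lambda>(t, c). if t \<le> T \<and> c = col t d then real n else 0)"
proof -
  define E' where "E' = (SOME E'. E' \<in> iso_class n E)"
  have E': "E' \<in> iso_class n E" unfolding E'_def using self_iso_class[OF G] by (rule someI)
  then have G': "graph_on n E'" and iso: "graph_iso n E E'" unfolding iso_class_def by auto
  have reg': "\<forall>w<n. card (nbrs E' w) = d" using iso_regular[OF G G' iso reg] .
  have wl': "wl E' t v = col t d" if "v < n" for t v using wl_regular[OF G' reg' that] .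
  have ph: "phi_wl n T (iso_class n E) (t, c) =
      (if (t, c) \<in> wl_index n T then real (card {v. v < n \<and> wl E' t v = c}) else 0)" for t c
    unfolding phi_wl_def E'_def[symmetric] phi_lab_def by simp
  have "phi_wl n T (iso_class n E) (t, c) = (if t \<le> T \<and> c = col t d then real n else 0)" for t c
  proof (cases "t \<le> T \<and> c = col t d")
    case True
    have "c \<in> wl_colours n t" unfolding wl_colours_def using True G' n wl'[of 0 t]
      by (intro CollectI exI[of _ E'] exI[of _ 0]) auto
    then have "(t, c) \<in> wl_index n T" using True unfolding wl_index_def by simp
    moreover have "{v. v < n \<and> wl E' t v = c} = {..<n}" using True wl' by auto
    ultimately show ?thesis using True ph[of t c] by simp
  next
    case False
    show ?thesis
    proof (cases "(t, c) \<in> wl_index n T")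
      case True
      then have "t \<le> T" unfolding wl_index_def by simp
      then have e: "{v. v < n \<and> wl E' t v = c} = {}" using False wl' by auto
      have "phi_wl n T (iso_class n E) (t, c) = real (card {v. v < n \<and> wl E' t v = c})"
        using ph[of t c] True by simp
      also have "\<dots> = 0" unfolding e by simp
      finally show ?thesis using False by auto
    next
      case F2: False
      have "phi_wl n T (iso_class n E) (t, c) = 0" using ph[of t c] F2 by simp
      then show ?thesis using False by auto
    qed
  qed
  note pt = this
  show ?thesis
  proof (rule ext)
    fix x :: "nat \<times> wlcol"
    obtain t c where x: "x = (t, c)" by (cases x)
    show "phi_wl n T (iso_class n E) x = (case x of (t, c) \<Rightarrow> if t \<le> T \<and> c = col t d then real n else 0)"
      unfolding x using pt[of t c] by simp
  qed
qed

definition offs :: "nat \<Rightarrow> nat \<Rightarrow> int set" where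
  "offs n k = {1..int k} \<union> {int n - int k..int n - 1}"

definition circ :: "nat \<Rightarrow> nat \<Rightarrow> nat set set" where
  "circ n k = {{u, w} | u w. u < n \<and> w < n \<and> (int w - int u) mod int n \<in> offs n k}"

lemma offs_range: "2 * k < n \<Longrightarrow> j \<in> offs n k \<Longrightarrow> 1 \<le> j \<and> j \<le> int n - 1"
  unfolding offs_def by auto

lemma offs_neg:
  assumes k: "2 * k < n" and x: "x mod int n \<in> offs n k"
  shows "(- x) mod int n \<in> offs n k"
proof -
  define j where "j = x mod int n"
  have j: "1 \<le> j" "j \<le> int n - 1" using offs_range[OF k] x unfolding j_def by auto
  have "(- x) mod int n = int n - j" using j unfolding j_def by (simp add: zmod_zminus1_eq_if)
  moreover have "int n - j \<in> offs n k" using x j k unfolding j_def[symmetric] offs_def by auto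
  ultimately show ?thesis by simp
qed

lemma circ_graph: "2 * k < n \<Longrightarrow> graph_on n (circ n k)"
  unfolding graph_on_def circ_def
proof safe
  fix u w assume k: "2 * k < n" and h: "u < n" "w < n" "(int w - int u) mod int n \<in> offs n k"
  have "u \<noteq> w"
  proof
    assume "u = w"
    then have "(0::int) \<in> offs n k" using h by simp
    then show False using offs_range[OF k] by fastforce
  qed
  then show "\<exists>u' v'. {u, w} = {u', v'} \<and> u' < n \<and> v' < n \<and> u' \<noteq> v'" using h by blast
qed

lemma circ_nbrs:
  assumes k: "2 * k < n" and v: "v < n"
  shows "nbrs (circ n k) v = {u. u < n \<and> (int u - int v) mod int n \<in> offs n k}"
proof
  show "nbrs (circ n k) v \<subseteq> {u. u < n \<and> (int u - int v) mod int n \<in> offs n k}"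
  proof
    fix u assume "u \<in> nbrs (circ n k) v"
    then obtain a b where ab: "{u, v} = {a, b}" "a < n" "b < n" "(int b - int a) mod int n \<in> offs n k"
      unfolding nbrs_def circ_def by blast
    from ab(1) have "(u = a \<and> v = b) \<or> (u = b \<and> v = a)" by (auto simp: doubleton_eq_iff)
    then show "u \<in> {u. u < n \<and> (int u - int v) mod int n \<in> offs n k}"
    proof
      assume h: "u = a \<and> v = b"
      have "(- (int v - int u)) mod int n \<in> offs n k" using offs_neg[OF k] ab h by blast
      then show ?thesis using h ab by simp
    next
      assume h: "u = b \<and> v = a"
      then show ?thesis using ab by simp
    qed
  qed
next
  show "{u. u < n \<and> (int u - int v) mod int n \<in> offs n k} \<subseteq> nbrs (circ n k) v"
  proof
    fix u assume "u \<in> {u. u < n \<and> (int u - int v) mod int n \<in> offs n k}"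
    then have "u < n" "(int u - int v) mod int n \<in> offs n k" by auto
    then have "{v, u} \<in> circ n k" unfolding circ_def using v by blast
    then show "u \<in> nbrs (circ n k) v" unfolding nbrs_def by (simp add: insert_commute)
  qed
qed

lemma card_offs: "2 * k < n \<Longrightarrow> card (offs n k) = 2 * k"
proof -
  assume k: "2 * k < n"
  have d: "{1..int k} \<inter> {int n - int k..int n - 1} = {}" using k by auto
  have "card (offs n k) = card {1..int k} + card {int n - int k..int n - 1}"
    unfolding offs_def using d by (intro card_Un_disjoint) auto
  then show ?thesis by simp
qed

lemma circ_card:
  assumes k: "2 * k < n" and v: "v < n"
  shows "card (nbrs (circ n k) v) = 2 * k"
proof -
  let ?N = "{u. u < n \<and> (int u - int v) mod int n \<in> offs n k}"
  let ?f = "\<lambda>u. (int u - int v) mod int n"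
  have n0: "0 < int n" using k by simp
  have inj: "inj_on ?f ?N"
  proof (rule inj_onI)
    fix u u' assume u: "u \<in> ?N" and u': "u' \<in> ?N" and e: "?f u = ?f u'"
    have "int u = int u mod int n" using u by simp
    also have "\<dots> = ((int u - int v) + int v) mod int n" by simp
    also have "\<dots> = (?f u + int v) mod int n" by (simp add: mod_add_left_eq)
    also have "\<dots> = (?f u' + int v) mod int n" using e by simp
    also have "\<dots> = ((int u' - int v) + int v) mod int n" by (simp add: mod_add_left_eq)
    also have "\<dots> = int u'" using u' by simp
    finally show "u = u'" by simp
  qed
  have im: "?f ` ?N = offs n k"
  proof
    show "?f ` ?N \<subseteq> offs n k" by auto
  next
    show "offs n k \<subseteq> ?f ` ?N"
    proof
      fix j assume j: "j \<in> offs n k"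
      have jr: "1 \<le> j" "j \<le> int n - 1" using offs_range[OF k j] by auto
      define u where "u = nat ((int v + j) mod int n)"
      have u1: "int u = (int v + j) mod int n" unfolding u_def using n0 by simp
      have u2: "u < n" using u1 n0 by (metis nat_int of_nat_less_iff pos_mod_bound)
      have "?f u = ((int v + j) mod int n - int v) mod int n" using u1 by simp
      also have "\<dots> = (int v + j - int v) mod int n" by (simp add: mod_diff_left_eq)
      also have "\<dots> = j" using jr by simp
      finally have fu: "?f u = j" .
      then show "j \<in> ?f ` ?N" using u2 j by (intro image_eqI[of _ _ u]) auto
    qed
  qed
  have "card ?N = card (offs n k)" using inj im card_image by fastforce
  then show ?thesis using circ_nbrs[OF k v] card_offs[OF k] by simp
qed

definition wv :: "nat \<Rightarrow> real \<Rightarrow> nat \<Rightarrow> nat \<times> wlcol \<Rightarrow> real" where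
  "wv T \<alpha> k = (\<lambda>(t, c). if t \<le> T \<and> c = col t (2 * k) then \<alpha> else 0)"

lemma wv_at: "0 < t \<Longrightarrow> wv T \<alpha> k' (t, col t (2 * k)) = (if t \<le> T \<and> k' = k then \<alpha> else 0)"
  unfolding wv_def using col_inj[of t "2 * k" "2 * k'"] by auto

lemma wv_inj: "0 < T \<Longrightarrow> \<alpha> \<noteq> 0 \<Longrightarrow> wv T \<alpha> k = wv T \<alpha> k' \<Longrightarrow> k = k'"
proof -
  assume T: "0 < T" and a: "\<alpha> \<noteq> 0" and e: "wv T \<alpha> k = wv T \<alpha> k'"
  have "wv T \<alpha> k (1, col 1 (2 * k)) = \<alpha>" using wv_at[of 1 T \<alpha> k k] T by simp
  moreover have "wv T \<alpha> k' (1, col 1 (2 * k)) = (if k' = k then \<alpha> else 0)" using wv_at[of 1 T \<alpha> k' k] T by simp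
  ultimately show "k = k'" using e a by (metis)
qed

lemma wv_norm:
  assumes finI: "finite I" and sub: "\<forall>t\<le>T. (t, col t (2 * k)) \<in> I"
  shows "(\<Sum>i\<in>I. (wv T \<alpha> k i)\<^sup>2) = real (T + 1) * \<alpha>\<^sup>2"
proof -
  let ?J = "(\<lambda>t. (t, col t (2 * k))) ` {..T}"
  have JI: "?J \<subseteq> I" using sub by auto
  have z: "\<forall>i\<in>I - ?J. (wv T \<alpha> k i)\<^sup>2 = 0"
  proof
    fix i assume "i \<in> I - ?J"
    moreover obtain t c where i: "i = (t, c)" by (cases i)
    ultimately have "\<not> (t \<le> T \<and> c = col t (2 * k))" by auto
    then show "(wv T \<alpha> k i)\<^sup>2 = 0" unfolding i wv_def by auto
  qed
  have "(\<Sum>i\<in>I. (wv T \<alpha> k i)\<^sup>2) = (\<Sum>i\<in>?J. (wv T \<alpha> k i)\<^sup>2)"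
    using sum.mono_neutral_right[OF finI JI z] .
  also have "\<dots> = (\<Sum>i\<in>?J. \<alpha>\<^sup>2)" by (intro sum.cong) (auto simp: wv_def)
  also have "\<dots> = real (card ?J) * \<alpha>\<^sup>2" by simp
  also have "card ?J = T + 1" by (subst card_image) (auto simp: inj_on_def)
  finally show ?thesis .
qed

lemma wv_K:
  assumes sub: "\<forall>t\<le>T. (t, col t (2 * k)) \<in> I" and a: "\<alpha> \<noteq> 0"
  shows "{i\<in>I. 1 \<le> fst i \<and> wv T \<alpha> k i \<noteq> 0} = (\<lambda>t. (t, col t (2 * k))) ` {1..T}"
  using sub a unfolding wv_def by (auto split: if_splits)

lemma lower_generic:
  fixes emb :: "nat set set set \<Rightarrow> nat \<times> wlcol \<Rightarrow> real"
  assumes n: "0 < n" and T: "0 < T" and m: "0 < m" "2 * m \<le> n + 1"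
    and embk: "\<forall>k<m. emb (iso_class n (circ n k)) = wv T \<alpha> k"
    and a: "0 < \<alpha>"
    and R: "sqrt (real T + 1) * \<alpha> \<le> R"
    and lamc: "4 * lam\<^sup>2 * real m \<le> 2 * real T * \<alpha>\<^sup>2"
    and lam: "0 < lam"
  shows "real m \<le> real (vc_dim (graphs n) (H_class n (wl_index n T) {emb} R lam))"
proof -
  define I where "I = wl_index n T"
  have finI: "finite I" unfolding I_def by (rule finite_wl_index)
  have kn: "2 * k < n" if "k < m" for k using that m by linarith
  define Gk where "Gk k = iso_class n (circ n k)" for k
  have regk: "\<forall>v<n. card (nbrs (circ n k) v) = 2 * k" if "k < m" for k
    using circ_card[OF kn[OF that]] by blast
  have grk: "graph_on n (circ n k)" if "k < m" for k using circ_graph[OF kn[OF that]] .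
  have subI: "\<forall>t\<le>T. (t, col t (2 * k)) \<in> I" if k: "k < m" for k
  proof (intro allI impI)
    fix t assume t: "t \<le> T"
    have "wl (circ n k) t 0 = col t (2 * k)" using wl_regular[OF grk[OF k] regk[OF k] n] .
    then have "col t (2 * k) \<in> wl_colours n t" unfolding wl_colours_def using grk[OF k] n
      by (intro CollectI exI[of _ "circ n k"] exI[of _ 0]) auto
    then show "(t, col t (2 * k)) \<in> I" unfolding I_def wl_index_def using t by simp
  qed
  have eG: "emb (Gk k) = wv T \<alpha> k" if "k < m" for k using embk that unfolding Gk_def by blast
  have winj: "k = k'" if "k < m" "k' < m" "emb (Gk k) = emb (Gk k')" for k k'
  proof -
    have e: "wv T \<alpha> k = wv T \<alpha> k'" using eG[OF that(1)] eG[OF that(2)] that(3) by simp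
    show ?thesis by (rule wv_inj[OF T _ e]) (use a in simp)
  qed
  define A where "A = Gk ` {..<m}"
  have injG: "inj_on Gk {..<m}" using winj by (auto intro!: inj_onI)
  have cardA: "card A = m" unfolding A_def using injG by (simp add: card_image)
  have finA: "finite A" unfolding A_def by simp
  have Agr: "A \<subseteq> graphs n"
  proof
    fix G assume "G \<in> A"
    then obtain k where k: "k < m" "G = Gk k" unfolding A_def by blast
    show "G \<in> graphs n" unfolding graphs_def k(2) Gk_def
      by (rule imageI) (simp add: grk[OF k(1)])
  qed
  have Aemb: "\<exists>k<m. G = Gk k \<and> emb G = wv T \<alpha> k" if GA: "G \<in> A" for G
  proof -
    obtain k where k: "k < m" "G = Gk k" using GA unfolding A_def by blast
    then show ?thesis using eG[OF k(1)] by blast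
  qed
  have embinj: "G = G'" if GG: "G \<in> A" "G' \<in> A" "emb G = emb G'" for G G'
  proof -
    obtain k where k: "k < m" "G = Gk k" using GG(1) unfolding A_def by blast
    obtain k' where k': "k' < m" "G' = Gk k'" using GG(2) unfolding A_def by blast
    have "k = k'" using winj[OF k(1) k'(1)] GG(3) k(2) k'(2) by blast
    then show ?thesis using k k' by simp
  qed
  define H where "H = H_class n I {emb} R lam"
  have sh: "shatters H A"
    unfolding shatters_def
  proof
    fix \<tau> :: "nat set set set \<Rightarrow> bool"
    define h where "h G = (if G \<in> A then Some (\<tau> G) else None)" for G
    have supp: "supp h = A" unfolding supp_def h_def by auto
    have "h \<in> H"
      unfolding H_def H_class_def
    proof (intro CollectI conjI allI impI)
      show "supp h \<subseteq> graphs n" using supp Agr by simp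
    next
      fix Gs assume Gs: "set Gs \<subseteq> supp h"
      define L where "L = map (\<lambda>G. (emb G, the (h G))) Gs"
      have ball: "\<exists>z. \<forall>p\<in>set L. edist I z (fst p) \<le> R"
      proof (intro exI ballI)
        fix p assume "p \<in> set L"
        then obtain G where G: "G \<in> set Gs" "p = (emb G, the (h G))" unfolding L_def by auto
        then have "G \<in> A" using Gs supp by auto
        then obtain k where k: "k < m" "emb G = wv T \<alpha> k" using Aemb by blast
        have "edist I (\<lambda>_. 0) (fst p) = sqrt (\<Sum>i\<in>I. (wv T \<alpha> k i)\<^sup>2)"
          unfolding edist_def enorm_def G(2) k(2) by simp
        also have "\<dots> = sqrt (real (T + 1) * \<alpha>\<^sup>2)" using wv_norm[OF finI subI[OF k(1)]] by simp
        also have "\<dots> = sqrt (real T + 1) * \<alpha>" using a by (simp add: real_sqrt_mult)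
        finally show "edist I (\<lambda>_. 0) (fst p) \<le> R" using R by simp
      qed
      define S0 where "S0 = {fst q | q. q \<in> set L \<and> \<not> snd q}"
      define S1 where "S1 = {fst q | q. q \<in> set L \<and> snd q}"
      have S0e: "S0 = emb ` {G\<in>set Gs. \<not> \<tau> G}"
        unfolding S0_def L_def using Gs supp by (force simp: h_def)
      have S1e: "S1 = emb ` {G\<in>set Gs. \<tau> G}"
        unfolding S1_def L_def using Gs supp by (force simp: h_def)
      have S01: "S0 \<union> S1 \<subseteq> emb ` A" unfolding S0e S1e using Gs supp by auto
      have fin0: "finite S0" "finite S1" unfolding S0e S1e by auto
      have disj: "S0 \<inter> S1 = {}"
      proof (rule ccontr)
        assume "S0 \<inter> S1 \<noteq> {}"
        then obtain G G' where "G \<in> set Gs" "\<not> \<tau> G" "G' \<in> set Gs" "\<tau> G'" "emb G = emb G'"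
          unfolding S0e S1e by auto
        moreover then have "G = G'" using embinj Gs supp by auto
        ultimately show False by simp
      qed
      have cA: "card (emb ` A) \<le> m" using card_image_le[OF finA, of emb] cardA by simp
      have fA: "finite (emb ` A)" using finA by simp
      have "card S0 \<le> card (emb ` A)" using S01 by (intro card_mono[OF fA]) auto
      moreover have "card S1 \<le> card (emb ` A)" using S01 by (intro card_mono[OF fA]) auto
      ultimately have c0: "card S0 \<le> m" "card S1 \<le> m" using cA by linarith+
      define K where "K s = {i\<in>I. 1 \<le> fst i \<and> s i \<noteq> 0}" for s :: "nat \<times> wlcol \<Rightarrow> real"
      have sk: "\<exists>k<m. s = wv T \<alpha> k" if "s \<in> S0 \<union> S1" for s
        using that S01 Aemb by blast
      have Kk: "K (wv T \<alpha> k) = (\<lambda>t. (t, col t (2 * k))) ` {1..T}" if "k < m" for k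
        unfolding K_def using wv_K[OF subI[OF that]] a by simp
      have KI: "\<forall>s\<in>S0 \<union> S1. K s \<subseteq> I \<and> card (K s) = T"
      proof
        fix s assume "s \<in> S0 \<union> S1"
        then obtain k where k: "k < m" "s = wv T \<alpha> k" using sk by blast
        have "card (K s) = T" unfolding k(2) Kk[OF k(1)] by (subst card_image) (auto simp: inj_on_def)
        then show "K s \<subseteq> I \<and> card (K s) = T" unfolding K_def by auto
      qed
      have Kdisj: "\<forall>s\<in>S0 \<union> S1. \<forall>s'\<in>S0 \<union> S1. s \<noteq> s' \<longrightarrow> K s \<inter> K s' = {}"
      proof (intro ballI impI)
        fix s s' assume s: "s \<in> S0 \<union> S1" and s': "s' \<in> S0 \<union> S1" and ne: "s \<noteq> s'"
        obtain k where k: "k < m" "s = wv T \<alpha> k" using sk s by blast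
        obtain k' where k': "k' < m" "s' = wv T \<alpha> k'" using sk s' by blast
        have "k \<noteq> k'" using ne k k' by auto
        note kk = this
        show "K s \<inter> K s' = {}"
        proof (rule equals0I)
          fix i assume "i \<in> K s \<inter> K s'"
          then have i1: "i \<in> (\<lambda>t. (t, col t (2 * k))) ` {1..T}" and i2: "i \<in> (\<lambda>t. (t, col t (2 * k'))) ` {1..T}"
            unfolding k(2) k'(2) Kk[OF k(1)] Kk[OF k'(1)] by auto
          obtain t where t: "1 \<le> t" "i = (t, col t (2 * k))" using i1 by auto
          obtain t' where t': "i = (t', col t' (2 * k'))" using i2 by auto
          have pe: "(t, col t (2 * k)) = (t', col t' (2 * k'))" using trans[OF sym[OF t(2)] t'] .
          from pe obtain tt: "t = t'" and cc: "col t (2 * k) = col t' (2 * k')" by (rule Pair_inject)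
          have "col t (2 * k) = col t (2 * k')" using cc unfolding tt[symmetric] .
          moreover have "0 < t" using t(1) by simp
          ultimately have "2 * k = 2 * k'" using col_inj by blast
          then show False using kk by simp
        qed
      qed
      have val: "\<forall>s\<in>S0 \<union> S1. \<forall>s'\<in>S0 \<union> S1. \<forall>i\<in>K s. s' i = (if s' = s then \<alpha> else 0)"
      proof (intro ballI)
        fix s s' i assume s: "s \<in> S0 \<union> S1" and s': "s' \<in> S0 \<union> S1" and i: "i \<in> K s"
        obtain k where k: "k < m" "s = wv T \<alpha> k" using sk s by blast
        obtain k' where k': "k' < m" "s' = wv T \<alpha> k'" using sk s' by blast
        obtain t where t: "1 \<le> t" "t \<le> T" "i = (t, col t (2 * k))" using i unfolding k(2) Kk[OF k(1)] by auto
        have "s' i = (if k' = k then \<alpha> else 0)" unfolding k'(2) t(3) using wv_at[of t T \<alpha> k' k] t by simp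
        moreover have "(s' = s) = (k' = k)"
        proof
          assume "s' = s"
          then have e: "wv T \<alpha> k' = wv T \<alpha> k" using k k' by simp
          show "k' = k" by (rule wv_inj[OF T _ e]) (use a in simp)
        next
          assume "k' = k"
          then show "s' = s" using k k' by simp
        qed
        ultimately show "s' i = (if s' = s then \<alpha> else 0)" by simp
      qed
      have hull: "\<forall>p\<in>conv_hull S0. \<forall>p'\<in>conv_hull S1. 2 * lam \<le> edist I p p'"
      proof (intro ballI)
        fix p p' assume p: "p \<in> conv_hull S0" and p': "p' \<in> conv_hull S1"
        have Q: "2 * real T * \<alpha>\<^sup>2 / real m \<le> (\<Sum>i\<in>I. (p i - p' i)\<^sup>2)"
          by (rule hull_lower[OF finI fin0(1) fin0(2) disj KI Kdisj val c0(1) c0(2) p p'])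
        have "(2 * lam)\<^sup>2 = 4 * lam\<^sup>2" by (simp add: power_mult_distrib)
        also have "\<dots> \<le> 2 * real T * \<alpha>\<^sup>2 / real m" using lamc m by (simp add: field_simps)
        also have "\<dots> \<le> (\<Sum>i\<in>I. (p i - p' i)\<^sup>2)" using Q .
        finally have "2 * lam \<le> sqrt (\<Sum>i\<in>I. (p i - p' i)\<^sup>2)" by (rule real_le_rsqrt)
        then show "2 * lam \<le> edist I p p'" unfolding edist_def enorm_def by simp
      qed
      have sepL: "separable I R lam L"
        unfolding separable_def S0_def[symmetric] S1_def[symmetric] using ball hull by blast
      show "\<exists>emb'\<in>{emb}. separable I R lam (map (\<lambda>G. (emb' G, the (h G))) Gs)"
        using sepL unfolding L_def by simp
    qed
    moreover have "\<forall>x\<in>A. h x = Some (\<tau> x)" unfolding h_def by simp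
    ultimately show "\<exists>h\<in>H. \<forall>x\<in>A. h x = Some (\<tau> x)" by blast
  qed
  have mem: "card A \<in> {card A | A. A \<subseteq> graphs n \<and> finite A \<and> shatters H A}"
    using Agr finA sh by blast
  have bdd: "bdd_above {card A | A. A \<subseteq> graphs n \<and> finite A \<and> shatters H A}"
    by (rule bdd_aboveI[of _ "card (graphs n)"]) (auto intro: card_mono finite_graphs)
  have "card A \<le> vc_dim (graphs n) H" unfolding vc_dim_def by (rule cSup_upper[OF mem bdd])
  then show ?thesis using cardA unfolding H_def I_def by simp
qed

lemma vc_dim_le:
  assumes B: "0 \<le> B"
    and bnd: "\<And>A. A \<subseteq> X \<Longrightarrow> finite A \<Longrightarrow> shatters H A \<Longrightarrow> real (card A) \<le> B"
  shows "real (vc_dim X H) \<le> B"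
proof (cases "{card A | A. A \<subseteq> X \<and> finite A \<and> shatters H A} = {}")
  case True
  then show ?thesis unfolding vc_dim_def True using B by simp
next
  case False
  have "vc_dim X H \<le> nat \<lfloor>B\<rfloor>"
    unfolding vc_dim_def
  proof (rule cSup_least[OF False])
    fix x assume "x \<in> {card A | A. A \<subseteq> X \<and> finite A \<and> shatters H A}"
    then obtain A where A: "x = card A" "A \<subseteq> X" "finite A" "shatters H A" by blast
    have "real x \<le> B" using bnd[OF A(2-4)] A(1) by simp
    then show "x \<le> nat \<lfloor>B\<rfloor>" by linarith
  qed
  then have "real (vc_dim X H) \<le> real (nat \<lfloor>B\<rfloor>)" by simp
  also have "\<dots> \<le> B" using B by linarith
  finally show ?thesis .
qed

lemma colI:
  assumes k: "2 * k < n" and t: "t \<le> T"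
  shows "(t, col t (2 * k)) \<in> wl_index n T"
proof -
  have n: "0 < n" using k by simp
  have "wl (circ n k) t 0 = col t (2 * k)"
    using wl_regular[OF circ_graph[OF k] _ n] circ_card[OF k] by blast
  then have "col t (2 * k) \<in> wl_colours n t" unfolding wl_colours_def using circ_graph[OF k] n
    by (intro CollectI exI[of _ "circ n k"] exI[of _ 0]) auto
  then show ?thesis unfolding wl_index_def using t by simp
qed

lemma phi_circ:
  assumes k: "2 * k < n"
  shows "phi_wl n T (iso_class n (circ n k)) = wv T (real n) k"
proof -
  have n: "0 < n" using k by simp
  have "phi_wl n T (iso_class n (circ n k)) = (\<lambda>(t, c). if t \<le> T \<and> c = col t (2 * k) then real n else 0)"
    using phi_regular[OF circ_graph[OF k] _ n] circ_card[OF k] by blast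
  then show ?thesis unfolding wv_def .
qed

lemma phi_norm_circ:
  assumes k: "2 * k < n"
  shows "phi_wl_norm n T (iso_class n (circ n k)) = wv T (1 / sqrt (real T + 1)) k"
proof -
  have n: "0 < n" using k by simp
  have sI: "\<forall>t\<le>T. (t, col t (2 * k)) \<in> wl_index n T" using colI[OF k] by blast
  have ss: "(\<Sum>i\<in>wl_index n T. (wv T (real n) k i)\<^sup>2) = real (T + 1) * (real n)\<^sup>2"
    by (rule wv_norm[OF finite_wl_index sI])
  have nr: "enorm (wl_index n T) (wv T (real n) k) = sqrt (real T + 1) * real n"
    unfolding enorm_def ss by (simp add: real_sqrt_mult)
  have pos: "0 < sqrt (real T + 1) * real n" using n by simp
  show ?thesis
  proof (rule ext)
    fix i :: "nat \<times> wlcol"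
    obtain t c where i: "i = (t, c)" by (cases i)
    show "phi_wl_norm n T (iso_class n (circ n k)) i = wv T (1 / sqrt (real T + 1)) k i"
      unfolding phi_wl_norm_def phi_circ[OF k] nr unfolding i wv_def using pos n by auto
  qed
qed

theorem theorem4:
  shows
  "(\<exists>c1>0. \<exists>c2>0. \<exists>M::real. \<forall>(T::nat) (lam::real) (n::nat).
      let r = sqrt (real T + 1) * real n in
      0 < T \<longrightarrow> 0 < lam \<longrightarrow> r\<^sup>2 / lam\<^sup>2 \<le> real n \<longrightarrow> M \<le> r\<^sup>2 / lam\<^sup>2 \<longrightarrow>
        c1 * (r\<^sup>2 / lam\<^sup>2) \<le> real (vc_dim (graphs n) (H_class n (wl_index n T) (E_WL n T) r lam))
      \<and> real (vc_dim (graphs n) (H_class n (wl_index n T) (E_WL n T) r lam)) \<le> c2 * (r\<^sup>2 / lam\<^sup>2))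
   \<and>
   (\<exists>c1>0. \<exists>c2>0. \<exists>M::real. \<forall>(T::nat) (lam::real) (n::nat).
      let r = sqrt (real T / (real T + 1)) in
      0 < T \<longrightarrow> 0 < lam \<longrightarrow> r\<^sup>2 / lam\<^sup>2 \<le> real n \<longrightarrow> M \<le> 1 / lam\<^sup>2 \<longrightarrow>
        c1 * (1 / lam\<^sup>2) \<le> real (vc_dim (graphs n) (H_class n (wl_index n T) (E_WL_norm n T) 1 lam))
      \<and> real (vc_dim (graphs n) (H_class n (wl_index n T) (E_WL_norm n T) 1 lam)) \<le> c2 * (1 / lam\<^sup>2))"
proof (intro conjI)
  show "\<exists>c1>0. \<exists>c2>0. \<exists>M::real. \<forall>(T::nat) (lam::real) (n::nat).
      let r = sqrt (real T + 1) * real n in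
      0 < T \<longrightarrow> 0 < lam \<longrightarrow> r\<^sup>2 / lam\<^sup>2 \<le> real n \<longrightarrow> M \<le> r\<^sup>2 / lam\<^sup>2 \<longrightarrow>
        c1 * (r\<^sup>2 / lam\<^sup>2) \<le> real (vc_dim (graphs n) (H_class n (wl_index n T) (E_WL n T) r lam))
      \<and> real (vc_dim (graphs n) (H_class n (wl_index n T) (E_WL n T) r lam)) \<le> c2 * (r\<^sup>2 / lam\<^sup>2)"
  proof (rule exI[of _ "1/8"], rule conjI, simp, rule exI[of _ 3], rule conjI, simp, rule exI[of _ 8],
      intro allI, unfold Let_def, intro impI)
    fix T :: nat and lam :: real and n :: nat
    assume T: "0 < T" and lam: "0 < lam"
    define r where "r = sqrt (real T + 1) * real n"
    define x where "x = r\<^sup>2 / lam\<^sup>2"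
    assume xn: "(sqrt (real T + 1) * real n)\<^sup>2 / lam\<^sup>2 \<le> real n"
      and x8: "8 \<le> (sqrt (real T + 1) * real n)\<^sup>2 / lam\<^sup>2"
    have xn': "x \<le> real n" and x8': "8 \<le> x" using xn x8 unfolding x_def r_def by auto
    have r2: "r\<^sup>2 = (real T + 1) * (real n)\<^sup>2" unfolding r_def by (simp add: power_mult_distrib)
    have n: "0 < n" using xn' x8' by simp
    define m where "m = nat \<lfloor>x / 4\<rfloor>"
    have m1: "real m \<le> x / 4" "x / 4 - 1 \<le> real m" unfolding m_def using x8' by linarith+
    have m0: "0 < m" using m1 x8' by linarith
    have m2: "2 * m \<le> n + 1" using m1 xn' by linarith
    have "real m \<le> real (vc_dim (graphs n) (H_class n (wl_index n T) {phi_wl n T} r lam))"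
    proof (rule lower_generic[OF n T m0 m2 _ _ _ _ lam, of _ "real n"])
      show "\<forall>k<m. phi_wl n T (iso_class n (circ n k)) = wv T (real n) k"
        using phi_circ m2 by auto
      show "0 < real n" using n by simp
      show "sqrt (real T + 1) * real n \<le> r" unfolding r_def by simp
      have "4 * lam\<^sup>2 * real m \<le> 4 * lam\<^sup>2 * (x / 4)" using m1 lam by simp
      also have "\<dots> = (real T + 1) * (real n)\<^sup>2" unfolding x_def r2 using lam by simp
      also have "\<dots> \<le> 2 * real T * (real n)\<^sup>2" using T by (intro mult_right_mono) auto
      finally show "4 * lam\<^sup>2 * real m \<le> 2 * real T * (real n)\<^sup>2" .
    qed
    then have lo: "1 / 8 * x \<le> real (vc_dim (graphs n) (H_class n (wl_index n T) (E_WL n T) r lam))"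
      unfolding E_WL_def using m1 x8' by linarith
    have up: "real (vc_dim (graphs n) (H_class n (wl_index n T) (E_WL n T) r lam)) \<le> 3 * x"
    proof (rule vc_dim_le)
      show "0 \<le> 3 * x" using x8' by simp
      fix A assume "A \<subseteq> graphs n" "finite A" "shatters (H_class n (wl_index n T) (E_WL n T) r lam) A"
      then have "real (card A) \<le> 2 * (r\<^sup>2 / lam\<^sup>2) + 1" unfolding E_WL_def using vc_upper lam by blast
      then show "real (card A) \<le> 3 * x" using x8' unfolding x_def by linarith
    qed
    have lo': "1 / 8 * ((sqrt (real T + 1) * real n)\<^sup>2 / lam\<^sup>2)
          \<le> real (vc_dim (graphs n) (H_class n (wl_index n T) (E_WL n T) (sqrt (real T + 1) * real n) lam))"
      using lo unfolding x_def r_def .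
    have up': "real (vc_dim (graphs n) (H_class n (wl_index n T) (E_WL n T) (sqrt (real T + 1) * real n) lam))
          \<le> 3 * ((sqrt (real T + 1) * real n)\<^sup>2 / lam\<^sup>2)"
      using up unfolding x_def r_def .
    show "1 / 8 * ((sqrt (real T + 1) * real n)\<^sup>2 / lam\<^sup>2)
          \<le> real (vc_dim (graphs n) (H_class n (wl_index n T) (E_WL n T) (sqrt (real T + 1) * real n) lam)) \<and>
          real (vc_dim (graphs n) (H_class n (wl_index n T) (E_WL n T) (sqrt (real T + 1) * real n) lam))
          \<le> 3 * ((sqrt (real T + 1) * real n)\<^sup>2 / lam\<^sup>2)"
      using lo' up' by (rule conjI)
  qed
next
  show "\<exists>c1>0. \<exists>c2>0. \<exists>M::real. \<forall>(T::nat) (lam::real) (n::nat).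
      let r = sqrt (real T / (real T + 1)) in
      0 < T \<longrightarrow> 0 < lam \<longrightarrow> r\<^sup>2 / lam\<^sup>2 \<le> real n \<longrightarrow> M \<le> 1 / lam\<^sup>2 \<longrightarrow>
        c1 * (1 / lam\<^sup>2) \<le> real (vc_dim (graphs n) (H_class n (wl_index n T) (E_WL_norm n T) 1 lam))
      \<and> real (vc_dim (graphs n) (H_class n (wl_index n T) (E_WL_norm n T) 1 lam)) \<le> c2 * (1 / lam\<^sup>2)"
  proof (rule exI[of _ "1/8"], rule conjI, simp, rule exI[of _ 3], rule conjI, simp, rule exI[of _ 8],
      intro allI, unfold Let_def, intro impI)
    fix T :: nat and lam :: real and n :: nat
    assume T: "0 < T" and lam: "0 < lam"
    define x where "x = 1 / lam\<^sup>2"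
    assume xn: "(sqrt (real T / (real T + 1)))\<^sup>2 / lam\<^sup>2 \<le> real n"
      and x8: "8 \<le> 1 / lam\<^sup>2"
    have x8': "8 \<le> x" using x8 unfolding x_def .
    have q: "(sqrt (real T / (real T + 1)))\<^sup>2 = real T / (real T + 1)" by simp
    have half: "1 / 2 \<le> real T / (real T + 1)" using T by (simp add: field_simps)
    have xn2: "real T / (real T + 1) * x \<le> real n" using xn unfolding q x_def by simp
    have xn': "x \<le> 2 * real n"
    proof -
      have "1 / 2 * x \<le> real T / (real T + 1) * x" using half x8' by (intro mult_right_mono) auto
      then show ?thesis using xn2 by linarith
    qed
    have n: "0 < n" using xn' x8' by simp
    define m where "m = nat \<lfloor>x / 4\<rfloor>"
    have m1: "real m \<le> x / 4" "x / 4 - 1 \<le> real m" unfolding m_def using x8' by linarith+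
    have m0: "0 < m" using m1 x8' by linarith
    have m2: "2 * m \<le> n + 1" using m1 xn' by linarith
    have sq: "0 < sqrt (real T + 1)" by simp
    have "real m \<le> real (vc_dim (graphs n) (H_class n (wl_index n T) {phi_wl_norm n T} 1 lam))"
    proof (rule lower_generic[OF n T m0 m2 _ _ _ _ lam, of _ "1 / sqrt (real T + 1)"])
      show "\<forall>k<m. phi_wl_norm n T (iso_class n (circ n k)) = wv T (1 / sqrt (real T + 1)) k"
        using phi_norm_circ m2 by auto
      show "0 < 1 / sqrt (real T + 1)" using sq by simp
      show "sqrt (real T + 1) * (1 / sqrt (real T + 1)) \<le> 1" using sq by simp
      have a2: "(1 / sqrt (real T + 1))\<^sup>2 = 1 / (real T + 1)" by (simp add: power_divide)
      have "4 * lam\<^sup>2 * real m \<le> 4 * lam\<^sup>2 * (x / 4)" using m1 lam by simp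
      also have "\<dots> = 1" unfolding x_def using lam by simp
      also have "\<dots> \<le> 2 * real T * (1 / (real T + 1))" using T by (simp add: field_simps)
      finally show "4 * lam\<^sup>2 * real m \<le> 2 * real T * (1 / sqrt (real T + 1))\<^sup>2" unfolding a2 .
    qed
    then have lo: "1 / 8 * x \<le> real (vc_dim (graphs n) (H_class n (wl_index n T) (E_WL_norm n T) 1 lam))"
      unfolding E_WL_norm_def using m1 x8' by linarith
    have up: "real (vc_dim (graphs n) (H_class n (wl_index n T) (E_WL_norm n T) 1 lam)) \<le> 3 * x"
    proof (rule vc_dim_le)
      show "0 \<le> 3 * x" using x8' by simp
      fix A assume "A \<subseteq> graphs n" "finite A" "shatters (H_class n (wl_index n T) (E_WL_norm n T) 1 lam) A"
      then have "real (card A) \<le> 2 * (1\<^sup>2 / lam\<^sup>2) + 1" unfolding E_WL_norm_def using vc_upper lam by blast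
      then show "real (card A) \<le> 3 * x" using x8' unfolding x_def by simp
    qed
    have lo': "1 / 8 * (1 / lam\<^sup>2) \<le> real (vc_dim (graphs n) (H_class n (wl_index n T) (E_WL_norm n T) 1 lam))"
      using lo unfolding x_def .
    have up': "real (vc_dim (graphs n) (H_class n (wl_index n T) (E_WL_norm n T) 1 lam)) \<le> 3 * (1 / lam\<^sup>2)"
      using up unfolding x_def .
    show "1 / 8 * (1 / lam\<^sup>2) \<le> real (vc_dim (graphs n) (H_class n (wl_index n T) (E_WL_norm n T) 1 lam)) \<and>
      real (vc_dim (graphs n) (H_class n (wl_index n T) (E_WL_norm n T) 1 lam)) \<le> 3 * (1 / lam\<^sup>2)"
      using lo' up' by (rule conjI)
  qed
qed
end
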